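(* Let $f$ be a spectral density on $\Lambda$ and suppose that $f(\lambda)=0$ for almost all $\lambda$ with $e^{i\lambda}\in\Gamma$, where $\Gamma\subset\mathbb T$ is an arc of length $2\delta$ with $0<\delta<\pi$. Then $$\limsup_{n\to\infty}\sqrt[n]{\sigma_n(f)}\le\cos(\delta/2)<1,$$ so in particular $\sigma_n(f)$ decreases to zero exponentially.
   Context: $\Lambda=[-\pi,\pi]$, $\mathbb T$ the unit circle. A spectral density is $f\ge0$, $f\in L^1(\Lambda)$, positive on a set of positive measure. $\sigma_n^2(f)=\min_{c_1,\dots,c_n\in\mathbb C}\int_\Lambda|1-\sum_{k=1}^n c_ke^{-ik\lambda}|^2f(\lambda)\,d\lambda$ and $\sigma_n(f)=\sqrt{\sigma_n^2(f)}$. *)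

theory Defs
  imports "HOL-Analysis.Analysis" "HOL-Library.Liminf_Limsup"
begin

definition spectral_density :: "(real \<Rightarrow> real) \<Rightarrow> bool" where
  "spectral_density f \<longleftrightarrow>
     (\<forall>l\<in>{-pi..pi}. f l \<ge> 0) \<and>
     set_integrable lebesgue {-pi..pi} f \<and>
     emeasure lebesgue {l\<in>{-pi..pi}. f l > 0} > 0"

definition sigma_sq :: "nat \<Rightarrow> (real \<Rightarrow> real) \<Rightarrow> real" where
  "sigma_sq n f = (INF c::nat \<Rightarrow> complex.
      (LINT l:{-pi..pi}|lebesgue.
         (cmod (1 - (\<Sum>k=1..n. c k * exp (- \<i> * of_nat k * of_real l))))\<^sup>2 * f l))"

definition sigma :: "nat \<Rightarrow> (real \<Rightarrow> real) \<Rightarrow> real" where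
  "sigma n f = sqrt (sigma_sq n f)"

definition arc :: "real \<Rightarrow> real \<Rightarrow> complex set" where
  "arc a \<delta> = {exp (\<i> * of_real t) | t. a - \<delta> \<le> t \<and> t \<le> a + \<delta>}"

end

theory Submission imports Defs "HOL-Complex_Analysis.Complex_Analysis" begin


fun Tch :: "real \<Rightarrow> nat \<Rightarrow> real" where
  "Tch x 0 = 1"
| "Tch x (Suc 0) = x"
| "Tch x (Suc (Suc n)) = 2 * x * Tch x (Suc n) - Tch x n"

lemma induct2: assumes "P 0" "P 1" "\<And>n. P n \<Longrightarrow> P (Suc n) \<Longrightarrow> P (Suc (Suc n))" shows "P n"
proof -
  have "P n \<and> P (Suc n)" by (induction n) (use assms in auto)
  thus ?thesis by simp
qed

lemma Tch_cos: "Tch (cos t) n = cos (real n * t)"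
proof (induction n rule: induct2)
  case (3 n)
  have e1: "real (Suc (Suc n)) * t = real (Suc n)*t + t" by (simp add: algebra_simps)
  have e2: "real n * t = real (Suc n)*t - t" by (simp add: algebra_simps)
  show ?case using 3 unfolding Tch.simps e1 by (simp only: e2 cos_add cos_diff) (simp add: algebra_simps)
qed auto

lemma Tch_bound: "\<bar>x\<bar> \<le> 1 \<Longrightarrow> \<bar>Tch x n\<bar> \<le> 1"
  using Tch_cos[of "arccos x" n] cos_arccos_abs[of x] by simp

fun Rp :: "real \<Rightarrow> nat \<Rightarrow> complex poly" where
  "Rp c 0 = 1"
| "Rp c (Suc 0) = smult (of_real (1/(1-c))) [:1, -of_real (1+c), 1:]"
| "Rp c (Suc (Suc n)) = smult 2 (Rp c 1 * Rp c (Suc n)) - monom 1 2 * Rp c n"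

lemma Rp_degree: "degree (Rp c n) \<le> 2 * n"
proof (induction n rule: Rp.induct)
  case (3 c n)
  have d1: "degree (Rp c 1) \<le> 2" by (simp add: degree_pCons_eq_if)
  have "degree (smult 2 (Rp c 1 * Rp c (Suc n))) \<le> 2 * Suc (Suc n)"
    using degree_mult_le[of "Rp c 1" "Rp c (Suc n)"] d1 3 by (simp add: degree_smult_le order_trans) 
  moreover have "degree (monom (1::complex) 2 * Rp c n) \<le> 2 * Suc (Suc n)"
    using degree_mult_le[of "monom (1::complex) 2" "Rp c n"] 3 by (simp add: degree_monom_eq)
  ultimately show ?case by (simp only: Rp.simps) (meson degree_diff_le)
qed (auto simp: degree_pCons_eq_if)

lemma Rp_zero: "poly (Rp c n) 0 = (if n = 0 then 1 else of_real ((2/(1-c))^n / 2))"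
proof (induction n rule: induct2)
  case (3 n)
  have "poly (Rp c (Suc (Suc n))) 0 = 2 * of_real (1/(1-c)) * poly (Rp c (Suc n)) 0"
    by (simp add: poly_monom)
  also have "\<dots> = of_real ((2/(1-c))^(Suc (Suc n)) / 2)" using 3(2)
    by (simp add: field_simps)
  finally show ?case by simp
next
  case 2
  have e: "(2/(1-c))^1/2 = 1/(1-c)" by (cases "c = 1") (simp_all add: field_simps)
  have "poly (Rp c 1) 0 = of_real ((2/(1-c))^1/2)" by (subst e) simp
  then show ?case by simp
qed auto

lemma Rp1_circle:
  assumes "cmod z = 1" "c < 1"
  shows "poly (Rp c 1) z = z * of_real ((2 * Re z - 1 - c)/(1-c))"
proof -
  have "z * cnj z = 1" using complex_norm_square[of z] assms by simp
  hence zz: "z * of_real (2 * Re z) = z^2 + 1" using complex_add_cnj[of z]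
    by (metis distrib_left mult.commute power2_eq_square)
  have ne: "1 - complex_of_real c \<noteq> 0" using assms(2)
    by (metis of_real_1 of_real_diff of_real_eq_0_iff right_minus_eq less_irrefl)
  have "z * of_real ((2 * Re z - 1 - c)/(1-c)) = (z * of_real (2 * Re z) - z * (1 + of_real c)) / (1 - of_real c)"
    by (simp add: field_simps)
  also have "\<dots> = (z^2 + 1 - z * (1 + of_real c)) / (1 - of_real c)" by (simp only: zz)
  also have "\<dots> = of_real (1/(1-c)) * (z^2 + 1 - z * (1 + of_real c))"
    by (simp add: divide_inverse mult.commute)
  also have "\<dots> = poly (Rp c 1) z"
  proof -
    have "K * (z^2 + 1 - z * (1 + of_real c)) = K * (1 + z*(-(of_real (1+c)) + z*(1+z*0)))" for K
      by (simp add: algebra_simps power2_eq_square)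
    thus ?thesis by (simp only: Rp.simps One_nat_def poly_smult poly_pCons poly_0)
  qed
  finally show ?thesis by simp
qed

lemma Rp_circle:
  assumes "cmod z = 1" "c < 1"
  shows "poly (Rp c n) z = z ^ n * of_real (Tch ((2 * Re z - 1 - c)/(1-c)) n)"
proof (induction n rule: induct2)
  case 2
  then show ?case using Rp1_circle[OF assms] by simp
next
  case (3 n)
  define L where "L = (2 * Re z - 1 - c)/(1-c)"
  have "poly (Rp c (Suc (Suc n))) z = 2 * poly (Rp c 1) z * poly (Rp c (Suc n)) z - z^2 * poly (Rp c n) z"
    by (simp add: poly_monom del: Rp.simps(2))
  also have "\<dots> = 2 * (z * of_real L) * (z ^ Suc n * of_real (Tch L (Suc n))) - z^2 * (z ^ n * of_real (Tch L n))"
    by (simp only: Rp1_circle[OF assms] 3 L_def)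
  also have "\<dots> = z ^ Suc (Suc n) * of_real (2 * L * Tch L (Suc n) - Tch L n)"
    by (simp add: algebra_simps power2_eq_square)
  finally show ?case by (simp add: L_def)
qed auto


lemma in_arc:
  assumes "0 < \<delta>" "\<delta> < pi" "cos (l - a) > cos \<delta>"
  shows "exp (\<i> * of_real l) \<in> arc a \<delta>"
proof -
  define x where "x = l - a"
  define s where "s = arccos (cos x)"
  have c1: "\<bar>cos x\<bar> \<le> 1" by simp
  have cs: "cos s = cos x" unfolding s_def using cos_arccos_abs[OF c1] .
  have ss: "sin s = \<bar>sin x\<bar>" unfolding s_def using sin_arccos_abs[OF c1]
    by (simp add: sin_squared_eq[symmetric])
  have sb: "0 \<le> s" "s \<le> pi" unfolding s_def using c1 by (auto intro: arccos_lbound arccos_ubound)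
  have "s < \<delta>" using cos_mono_less_eq[of \<delta> s] sb assms cs x_def by auto
  define t0 where "t0 = (if sin x \<ge> 0 then s else - s)"
  have ct: "cos t0 = cos x" "sin t0 = sin x" using cs ss by (auto simp: t0_def)
  have tb: "-\<delta> \<le> t0" "t0 \<le> \<delta>" using \<open>s < \<delta>\<close> sb by (auto simp: t0_def)
  have "exp (\<i> * of_real (a + t0)) = exp (\<i> * of_real l)"
  proof -
    have "cis t0 = cis x" using ct by (simp add: complex_eq_iff)
    hence "cis a * cis t0 = cis a * cis x" by simp
    hence "cis (a + t0) = cis (a + x)" by (simp add: cis_mult)
    hence "cis (a + t0) = cis l" by (simp add: x_def)
    thus ?thesis by (simp add: cis_conv_exp)
  qed
  thus ?thesis unfolding arc_def using tb by (intro CollectI exI[of _ "a + t0"]) auto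
qed


lemma good_poly:
  assumes "0 < \<delta>" "\<delta> < pi"
  shows "\<exists>cc::nat\<Rightarrow>complex. \<forall>l. cos (l - a) \<le> cos \<delta> \<longrightarrow>
    cmod (1 - (\<Sum>k=1..n. cc k * exp (- \<i> * of_nat k * of_real l))) \<le> 2 * cos (\<delta>/2) ^ (2 * (n div 2))"
proof -
  define \<rho> where "\<rho> = cos (\<delta>/2)"
  have \<rho>pos: "0 < \<rho>" unfolding \<rho>_def using assms by (intro cos_gt_zero_pi) auto
  define c where "c = - cos \<delta>"
  have hc: "1 - c = 2 * \<rho>^2" unfolding c_def \<rho>_def using cos_double_cos[of "\<delta>/2"] by simp
  have c1: "c < 1" using hc \<rho>pos by (smt (verit) zero_less_power)
  define m where "m = n div 2"
  define p where "p = Rp c m"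
  define r where "r = (if m = 0 then 1 else (2/(1-c))^m / 2)"
  have hv: "poly p 0 = of_real r" unfolding p_def r_def by (simp add: Rp_zero)
  have rpos: "r > 0" unfolding r_def using c1 by auto
  have hr: "1 / r \<le> 2 * \<rho>^(2*m)"
  proof (cases "m = 0")
    case True then show ?thesis by (simp add: r_def)
  next
    case False
    have "2/(1-c) = 1/\<rho>^2" using hc \<rho>pos by simp
    hence "r = (1/\<rho>^2)^m/2" using False by (simp add: r_def)
    hence "1/r = 2 * (\<rho>^2)^m" by (simp add: power_one_over)
    thus ?thesis by (simp add: power_mult)
  qed
  have degp: "degree p \<le> n" unfolding p_def m_def using Rp_degree[of c "n div 2"] by simp
  define u where "u = - exp (\<i> * of_real a)"
  define cc where "cc k = - (coeff p k * u^k) / of_real r" for k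
  have "cmod (1 - (\<Sum>k=1..n. cc k * exp (- \<i> * of_nat k * of_real l))) \<le> 2 * \<rho> ^ (2 * m)"
    if hl: "cos (l - a) \<le> cos \<delta>" for l
  proof -
    define w where "w = exp (- \<i> * of_real l)"
    have hw: "exp (- \<i> * of_nat k * of_real l) = w^k" for k
    proof -
      have "- \<i> * of_nat k * of_real l = of_nat k * (- \<i> * of_real l)" by simp
      thus ?thesis unfolding w_def by (simp only: exp_of_nat_mult)
    qed
    have s1: "(\<Sum>k=1..n. cc k * w^k) = - (\<Sum>k=1..n. coeff p k * (u*w)^k) / of_real r"
    proof -
      have "(\<Sum>k=1..n. cc k * w^k) = (\<Sum>k=1..n. - ((coeff p k * (u*w)^k) / of_real r))"
        by (intro sum.cong) (simp_all add: cc_def power_mult_distrib)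
      also have "\<dots> = - (\<Sum>k=1..n. coeff p k * (u*w)^k) / of_real r"
        by (simp only: sum_negf sum_divide_distrib[symmetric] minus_divide_left)
      finally show ?thesis .
    qed
    have s2: "poly p (u*w) = (\<Sum>k\<le>n. coeff p k * (u*w)^k)"
      unfolding poly_altdef using degp
      by (intro sum.mono_neutral_left) (auto simp: coeff_eq_0)
    have s3: "(\<Sum>k\<le>n. coeff p k * (u*w)^k) = coeff p 0 + (\<Sum>k=1..n. coeff p k * (u*w)^k)"
    proof -
      have "{..n} = insert 0 {1..n}" by auto
      thus ?thesis by simp
    qed
    have rne: "(of_real r :: complex) \<noteq> 0" using rpos by simp
    have eq: "1 - (\<Sum>k=1..n. cc k * exp (- \<i> * of_nat k * of_real l)) = poly p (u*w) / of_real r"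
      unfolding hw s1 s2 s3 using hv rne by (simp add: poly_0_coeff_0 field_simps)
    have z: "u * w = - cis (a - l)"
      unfolding u_def w_def cis_conv_exp by (simp add: exp_add[symmetric] algebra_simps)
    have zn: "cmod (u*w) = 1" unfolding z by simp
    have zr: "Re (u*w) = - cos (l - a)" unfolding z by (simp add: cos_diff mult.commute)
    define L where "L = (2 * Re (u*w) - 1 - c)/(1-c)"
    have "Re (u*w) \<le> 1" using zn abs_Re_le_cmod[of "u*w"] by simp
    moreover have "c \<le> Re (u*w)" using zr hl c_def by simp
    ultimately have "\<bar>L\<bar> \<le> 1" unfolding L_def using c1
      by (auto simp: abs_le_iff divide_le_eq le_divide_eq)
    hence "\<bar>Tch L m\<bar> \<le> 1" by (rule Tch_bound)
    moreover have "cmod ((u*w)^m * of_real (Tch L m)) = cmod (u*w)^m * \<bar>Tch L m\<bar>"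
      by (simp only: norm_mult norm_power norm_of_real)
    ultimately have pb: "cmod (poly p (u*w)) \<le> 1" unfolding p_def Rp_circle[OF zn c1] L_def[symmetric]
      using zn by simp
    have "cmod (poly p (u*w) / of_real r) = cmod (poly p (u*w)) / r" using rpos by (simp add: norm_divide)
    also have "\<dots> \<le> 1 / r" using pb rpos by (simp add: divide_right_mono)
    finally show ?thesis using hr eq by simp
  qed
  thus ?thesis unfolding \<rho>_def m_def by blast
qed


lemma sigma_sq_bound:
  assumes sd: "spectral_density f"
    and d: "0 < \<delta>" "\<delta> < pi"
    and ae: "AE l in lebesgue. l \<in> {-pi..pi} \<and> exp (\<i> * of_real l) \<in> arc a \<delta> \<longrightarrow> f l = 0"
  shows "sigma_sq n f \<le> (2 * cos (\<delta>/2) ^ (2 * (n div 2)))^2 * (LINT l:{-pi..pi}|lebesgue. f l)"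
proof -
  define A where "A = {-pi..pi::real}"
  define B where "B = 2 * cos (\<delta>/2) ^ (2 * (n div 2))"
  have fnn: "\<And>l. l \<in> A \<Longrightarrow> 0 \<le> f l" and fint: "set_integrable lebesgue A f"
    using sd unfolding spectral_density_def A_def by auto
  obtain cc :: "nat \<Rightarrow> complex" where hcc: "\<And>l. cos (l - a) \<le> cos \<delta> \<Longrightarrow>
    cmod (1 - (\<Sum>k=1..n. cc k * exp (- \<i> * of_nat k * of_real l))) \<le> B"
    using good_poly[OF d, of a n] unfolding B_def by blast
  define Q where "Q l = cmod (1 - (\<Sum>k=1..n. cc k * exp (- \<i> * of_nat k * of_real l)))" for l
  define G where "G c = (LINT l:A|lebesgue.
         (cmod (1 - (\<Sum>k=1..n. c k * exp (- \<i> * of_nat k * of_real l))))\<^sup>2 * f l)" for c :: "nat \<Rightarrow> complex"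
  have Gnn: "0 \<le> G c" for c
    unfolding G_def set_lebesgue_integral_def
    by (intro integral_nonneg_AE AE_I2) (auto simp: indicator_def fnn)
  have "sigma_sq n f = Inf (range G)" unfolding sigma_sq_def G_def A_def by simp
  also have "\<dots> \<le> G cc"
    by (rule cInf_lower) (auto intro: bdd_belowI[of _ 0] Gnn)
  also have "G cc \<le> (LINT l:A|lebesgue. B^2 * f l)"
    unfolding G_def set_lebesgue_integral_def
  proof (rule integral_mono_AE')
    show "integrable lebesgue (\<lambda>x. indicator A x *\<^sub>R (B\<^sup>2 * f x))"
      using set_integrable_mult_right[of "B^2" lebesgue A f] fint unfolding set_integrable_def by simp
    show "AE x in lebesgue. 0 \<le> indicator A x *\<^sub>R (B\<^sup>2 * f x)"
      by (intro AE_I2) (auto simp: indicator_def fnn)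
    show "AE x in lebesgue. indicator A x *\<^sub>R ((cmod (1 - (\<Sum>k = 1..n. cc k * exp (- \<i> * of_nat k * of_real x))))\<^sup>2 * f x)
        \<le> indicator A x *\<^sub>R (B\<^sup>2 * f x)"
      using ae
    proof eventually_elim
      case (elim x)
      show ?case
      proof (cases "x \<in> A")
        case False then show ?thesis by simp
      next
        case True
        show ?thesis
        proof (cases "exp (\<i> * of_real x) \<in> arc a \<delta>")
          case True
          then show ?thesis using elim \<open>x \<in> A\<close> A_def by simp
        next
          case False
          hence "cos (x - a) \<le> cos \<delta>" using in_arc[OF d, of x a] by linarith
          hence q: "Q x \<le> B" using hcc Q_def by simp
          have "Q x ^ 2 \<le> B ^ 2" using q by (intro power_mono) (auto simp: Q_def)
          hence "Q x ^ 2 * f x \<le> B^2 * f x" using fnn[OF \<open>x \<in> A\<close>] by (rule mult_right_mono)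
          then show ?thesis using \<open>x \<in> A\<close> by (simp add: Q_def)
        qed
      qed
    qed
  qed
  also have "\<dots> = B^2 * (LINT l:A|lebesgue. f l)" by simp
  finally show ?thesis unfolding A_def B_def .
qed

theorem mainTheorem2:
  fixes f :: "real \<Rightarrow> real" and a \<delta> :: real
  assumes "spectral_density f"
    and "0 < \<delta>" and "\<delta> < pi"
    and "AE l in lebesgue. l \<in> {-pi..pi} \<and> exp (\<i> * of_real l) \<in> arc a \<delta> \<longrightarrow> f l = 0"
  shows "limsup (\<lambda>n. ereal (root n (sigma n f))) \<le> ereal (cos (\<delta> / 2)) \<and> cos (\<delta> / 2) < 1"
proof
  define \<rho> where "\<rho> = cos (\<delta>/2)"
  have \<rho>pos: "0 < \<rho>" unfolding \<rho>_def using assms by (intro cos_gt_zero_pi) auto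
  have \<rho>1: "\<rho> < 1" unfolding \<rho>_def using cos_mono_less_eq[of "\<delta>/2" 0] assms by auto
  show "cos (\<delta> / 2) < 1" using \<rho>1 \<rho>_def by simp
  define I where "I = (LINT l:{-pi..pi}|lebesgue. f l)"
  have Inn: "0 \<le> I" using assms(1) unfolding I_def set_lebesgue_integral_def spectral_density_def
    by (intro integral_nonneg_AE AE_I2) (auto simp: indicator_def)
  define K where "K = 2 * sqrt I / \<rho> + 1"
  have "0 \<le> 2 * sqrt I / \<rho>" using Inn \<rho>pos by simp
  hence Kpos: "0 < K" unfolding K_def by linarith
  have main: "root n (sigma n f) \<le> root n K * \<rho>" if "n \<ge> 1" for n
  proof -
    define B where "B = 2 * \<rho> ^ (2 * (n div 2))"
    have B0: "0 \<le> B" unfolding B_def using \<rho>pos by simp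
    have "sigma n f \<le> sqrt (B^2 * I)"
      unfolding sigma_def B_def \<rho>_def I_def
      by (rule real_sqrt_le_mono, rule sigma_sq_bound[OF assms])
    also have "\<dots> = B * sqrt I" using B0 by (simp add: real_sqrt_mult)
    also have "\<dots> \<le> 2 * \<rho>^(n-1) * sqrt I"
    proof -
      have "\<rho> ^ (2 * (n div 2)) \<le> \<rho>^(n-1)" using \<rho>pos \<rho>1 by (intro power_decreasing) auto
      thus ?thesis unfolding B_def using Inn by (intro mult_right_mono) auto
    qed
    also have "\<dots> = (2 * sqrt I / \<rho>) * \<rho>^n"
    proof -
      have "\<rho>^n = \<rho> * \<rho>^(n-1)" using that by (metis Suc_diff_1 less_le_trans zero_less_one power_Suc)
      thus ?thesis using \<rho>pos by (simp add: field_simps)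
    qed
    also have "\<dots> \<le> K * \<rho>^n" unfolding K_def using \<rho>pos by (simp add: distrib_right)
    finally have "root n (sigma n f) \<le> root n (K * \<rho>^n)" using that by (intro real_root_le_mono) auto
    also have "\<dots> = root n K * \<rho>" using that \<rho>pos by (simp add: real_root_mult real_root_power_cancel)
    finally show ?thesis .
  qed
  have "limsup (\<lambda>n. ereal (root n (sigma n f))) \<le> limsup (\<lambda>n. ereal (root n K * \<rho>))"
    by (rule Limsup_mono) (use main in \<open>auto simp: eventually_sequentially\<close>)
  also have "\<dots> = ereal \<rho>"
  proof (rule lim_imp_Limsup)
    show "(\<lambda>n. ereal (root n K * \<rho>)) \<longlonglongrightarrow> ereal \<rho>"
      using tendsto_mult[OF LIMSEQ_root_const[OF Kpos] tendsto_const[of \<rho>]] by simp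
  qed simp
  finally show "limsup (\<lambda>n. ereal (root n (sigma n f))) \<le> ereal (cos (\<delta> / 2))" unfolding \<rho>_def .
qed

end
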